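(* Let $A$ be a finite set, $n\in\mathbb N$, $\mu\in\Pr(A^n)$ and $r>0$. Then there exists $S\subseteq[n]$ with $|S|\ge(1-r)n$ such that $\mathrm{DTC}(\mu_S)\le r^{-1}\mathrm{TC}(\mu)$.
   Context: $[n]=\{1,\dots,n\}$; $\mu_S$ is the projection (marginal) of $\mu$ on $A^S$. For a tuple $\xi=(\xi_i)_{i\in I}$ of random variables with joint law $\nu$, $\mathrm{TC}(\nu)=\sum_{i\in I}\mathrm H(\xi_i)-\mathrm H(\xi)$ (total correlation) and $\mathrm{DTC}(\nu)=\mathrm H(\xi)-\sum_{i\in I}\mathrm H(\xi_i\,|\,\xi_{I\setminus\{i\}})$ (dual total correlation), with Shannon entropy. *)

theory Defs
  imports "HOL-Probability.Probability_Mass_Function"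
begin

definition entropy :: "'b pmf \<Rightarrow> real" where
  "entropy p = - (\<Sum>x\<in>set_pmf p. pmf p x * log 2 (pmf p x))"

definition cond_entropy :: "'c pmf \<Rightarrow> ('c \<Rightarrow> 'd) \<Rightarrow> ('c \<Rightarrow> 'e) \<Rightarrow> real" where
  "cond_entropy p X Y =
     (\<Sum>y\<in>Y ` set_pmf p. pmf (map_pmf Y p) y * entropy (map_pmf X (cond_pmf p {z. Y z = y})))"

definition marginal :: "nat set \<Rightarrow> (nat \<Rightarrow> 'a) pmf \<Rightarrow> (nat \<Rightarrow> 'a) pmf" where
  "marginal S \<nu> = map_pmf (\<lambda>x. restrict x S) \<nu>"

definition TC :: "nat set \<Rightarrow> (nat \<Rightarrow> 'a) pmf \<Rightarrow> real" where
  "TC I \<nu> = (\<Sum>i\<in>I. entropy (map_pmf (\<lambda>x. x i) \<nu>)) - entropy (map_pmf (\<lambda>x. restrict x I) \<nu>)"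

definition DTC :: "nat set \<Rightarrow> (nat \<Rightarrow> 'a) pmf \<Rightarrow> real" where
  "DTC I \<nu> = entropy (map_pmf (\<lambda>x. restrict x I) \<nu>)
     - (\<Sum>i\<in>I. cond_entropy \<nu> (\<lambda>x. x i) (\<lambda>x. restrict x (I - {i})))"

end

theory Submission
  imports Defs
begin

lemma entropy_superset:
  assumes "finite B" "set_pmf q \<subseteq> B"
  shows "entropy q = - (\<Sum>y\<in>B. pmf q y * log 2 (pmf q y))"
  unfolding entropy_def
  by (rule arg_cong[where f=uminus], rule sum.mono_neutral_left)
     (use assms in \<open>auto simp: set_pmf_eq\<close>)

lemma pmf_map_finite:
  assumes "finite F" "set_pmf q \<subseteq> F"
  shows "pmf (map_pmf f q) y = (\<Sum>z\<in>{z\<in>F. f z = y}. pmf q z)"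
proof -
  have "pmf (map_pmf f q) y = measure q (f -` {y})" by (rule pmf_map)
  also have "\<dots> = measure q (f -` {y} \<inter> set_pmf q)" by (simp add: measure_Int_set_pmf)
  also have "f -` {y} \<inter> set_pmf q = {z\<in>F. f z = y} \<inter> set_pmf q" using assms by auto
  also have "measure q \<dots> = measure q {z\<in>F. f z = y}" by (simp add: measure_Int_set_pmf)
  also have "\<dots> = (\<Sum>z\<in>{z\<in>F. f z = y}. pmf q z)"
    using assms by (simp add: measure_measure_pmf_finite)
  finally show ?thesis .
qed

lemma entropy_map_inj:
  assumes "inj_on h (set_pmf q)"
  shows "entropy (map_pmf h q) = entropy q"
  unfolding entropy_def set_map_pmf
  by (subst sum.reindex[OF assms]) (simp add: pmf_map_inj[OF assms])

lemma entropy_return: "entropy (return_pmf x) = 0"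
  unfolding entropy_def by simp

lemma gibbs:
  assumes "finite B" "\<And>z. z \<in> B \<Longrightarrow> a z \<ge> 0" "\<And>z. z \<in> B \<Longrightarrow> b z \<ge> 0"
    "\<And>z. z \<in> B \<Longrightarrow> a z > 0 \<Longrightarrow> b z > 0" "sum b B \<le> sum a B"
  shows "(\<Sum>z\<in>B. a z * log 2 (b z)) \<le> (\<Sum>z\<in>B. a z * log 2 (a z))"
proof -
  have t: "a z * log 2 (b z) - a z * log 2 (a z) \<le> (b z - a z) / ln 2" if "z \<in> B" for z
  proof (cases "a z > 0")
    case True
    then have bz: "b z > 0" using assms(4) that by blast
    have "a z * log 2 (b z) - a z * log 2 (a z) = a z * (ln (b z / a z) / ln 2)"
      using True bz by (simp add: log_def ln_div field_simps)
    also have "\<dots> \<le> a z * ((b z / a z - 1) / ln 2)"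
      using True bz by (intro mult_left_mono divide_right_mono ln_le_minus_one) auto
    also have "\<dots> = (b z - a z) / ln 2" using True by (simp add: field_simps)
    finally show ?thesis .
  next
    case False
    then have "a z = 0" using assms(2) that by force
    then show ?thesis using assms(3) that by simp
  qed
  have "(\<Sum>z\<in>B. a z * log 2 (b z)) - (\<Sum>z\<in>B. a z * log 2 (a z))
      = (\<Sum>z\<in>B. a z * log 2 (b z) - a z * log 2 (a z))" by (simp add: sum_subtractf)
  also have "\<dots> \<le> (\<Sum>z\<in>B. (b z - a z) / ln 2)" by (rule sum_mono[OF t])
  also have "\<dots> = (sum b B - sum a B) / ln 2" by (simp add: sum_divide_distrib[symmetric] sum_subtractf)
  also have "\<dots> \<le> 0" using assms(5) by (simp add: divide_nonpos_pos)
  finally show ?thesis by simp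
qed

lemma set_joint:
  "set_pmf (map_pmf (\<lambda>z. (X z, Y z)) p) \<subseteq> X ` set_pmf p \<times> Y ` set_pmf p"
  by auto

lemma marg_fst:
  assumes "finite (set_pmf p)"
  shows "(\<Sum>y\<in>Y ` set_pmf p. pmf (map_pmf (\<lambda>z. (X z, Y z)) p) (x, y)) = pmf (map_pmf X p) x"
proof -
  let ?J = "map_pmf (\<lambda>z. (X z, Y z)) p"
  let ?B = "X ` set_pmf p \<times> Y ` set_pmf p"
  have "map_pmf X p = map_pmf fst ?J" by (simp add: map_pmf_comp)
  then have "pmf (map_pmf X p) x = (\<Sum>v\<in>{v\<in>?B. fst v = x}. pmf ?J v)"
    using pmf_map_finite[of ?B ?J fst x] assms set_joint by auto
  also have "\<dots> = (\<Sum>v\<in>Pair x ` (Y ` set_pmf p). pmf ?J v)"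
  proof (rule sum.mono_neutral_left)
    show "finite (Pair x ` (Y ` set_pmf p))" using assms by simp
    show "{v\<in>?B. fst v = x} \<subseteq> Pair x ` (Y ` set_pmf p)" by auto
    show "\<forall>v\<in>Pair x ` (Y ` set_pmf p) - {v\<in>?B. fst v = x}. pmf ?J v = 0"
    proof
      fix v assume v: "v \<in> Pair x ` (Y ` set_pmf p) - {v\<in>?B. fst v = x}"
      then have "v \<notin> set_pmf ?J" using set_joint[of X Y p] by auto
      then show "pmf ?J v = 0" by (simp add: set_pmf_eq)
    qed
  qed
  also have "\<dots> = (\<Sum>y\<in>Y ` set_pmf p. pmf ?J (x, y))"
    by (subst sum.reindex) (auto intro: inj_onI)
  finally show ?thesis by simp
qed

lemma marg_snd:
  assumes "finite (set_pmf p)"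
  shows "(\<Sum>x\<in>X ` set_pmf p. pmf (map_pmf (\<lambda>z. (X z, Y z)) p) (x, y)) = pmf (map_pmf Y p) y"
proof -
  have "map_pmf (\<lambda>z. (X z, Y z)) p = map_pmf prod.swap (map_pmf (\<lambda>z. (Y z, X z)) p)"
    by (simp add: map_pmf_comp)
  then have "\<And>x. pmf (map_pmf (\<lambda>z. (X z, Y z)) p) (x, y) = pmf (map_pmf (\<lambda>z. (Y z, X z)) p) (y, x)"
  proof -
    fix x
    have "pmf (map_pmf prod.swap (map_pmf (\<lambda>z. (Y z, X z)) p)) (prod.swap (y, x)) = pmf (map_pmf (\<lambda>z. (Y z, X z)) p) (y, x)"
      by (rule pmf_map_inj') simp
    then show "pmf (map_pmf (\<lambda>z. (X z, Y z)) p) (x, y) = pmf (map_pmf (\<lambda>z. (Y z, X z)) p) (y, x)"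
      using \<open>map_pmf (\<lambda>z. (X z, Y z)) p = _\<close> by simp
  qed
  then show ?thesis using marg_fst[OF assms, where X=Y and Y=X and x=y] by simp
qed

lemma subadd:
  assumes fin: "finite (set_pmf p)"
  shows "entropy (map_pmf (\<lambda>z. (X z, Y z)) p) \<le> entropy (map_pmf X p) + entropy (map_pmf Y p)"
proof -
  define J where "J = map_pmf (\<lambda>z. (X z, Y z)) p"
  define P where "P = map_pmf X p"
  define Q where "Q = map_pmf Y p"
  define B where "B = X ` set_pmf p \<times> Y ` set_pmf p"
  have finB: "finite B" using fin by (simp add: B_def)
  have sJ: "set_pmf J \<subseteq> B" unfolding J_def B_def by (rule set_joint)
  have HJ: "entropy J = - (\<Sum>v\<in>B. pmf J v * log 2 (pmf J v))"
    by (rule entropy_superset[OF finB sJ])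
  have HP: "entropy P = - (\<Sum>x\<in>X ` set_pmf p. pmf P x * log 2 (pmf P x))"
    unfolding entropy_def P_def by simp
  have HQ: "entropy Q = - (\<Sum>y\<in>Y ` set_pmf p. pmf Q y * log 2 (pmf Q y))"
    unfolding entropy_def Q_def by simp
  have sumb: "(\<Sum>v\<in>B. pmf P (fst v) * pmf Q (snd v)) = 1"
  proof -
    have "(\<Sum>v\<in>B. pmf P (fst v) * pmf Q (snd v))
        = (\<Sum>x\<in>X ` set_pmf p. \<Sum>y\<in>Y ` set_pmf p. pmf P x * pmf Q y)"
      unfolding B_def by (simp add: sum.cartesian_product case_prod_beta)
    also have "\<dots> = (\<Sum>x\<in>X ` set_pmf p. pmf P x) * (\<Sum>y\<in>Y ` set_pmf p. pmf Q y)"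
      by (simp add: sum_product)
    also have "\<dots> = 1" using fin
      by (simp add: P_def Q_def sum_pmf_eq_1)
    finally show ?thesis .
  qed
  have suma: "(\<Sum>v\<in>B. pmf J v) = 1" by (rule sum_pmf_eq_1[OF finB sJ])
  have pos: "pmf P (fst v) * pmf Q (snd v) > 0" if "pmf J v > 0" for v
  proof -
    have "v \<in> set_pmf J" using that by (simp add: set_pmf_iff)
    then obtain z where "z \<in> set_pmf p" "v = (X z, Y z)" unfolding J_def by auto
    then have "fst v \<in> set_pmf P" "snd v \<in> set_pmf Q" unfolding P_def Q_def by auto
    then show ?thesis by (simp add: pmf_positive)
  qed
  have g: "(\<Sum>v\<in>B. pmf J v * log 2 (pmf P (fst v) * pmf Q (snd v))) \<le> (\<Sum>v\<in>B. pmf J v * log 2 (pmf J v))"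
    by (rule gibbs[OF finB]) (use sumb suma pos in auto)
  have "(\<Sum>v\<in>B. pmf J v * log 2 (pmf P (fst v) * pmf Q (snd v)))
      = (\<Sum>v\<in>B. pmf J v * log 2 (pmf P (fst v)) + pmf J v * log 2 (pmf Q (snd v)))"
  proof (rule sum.cong[OF refl])
    fix v assume "v \<in> B"
    show "pmf J v * log 2 (pmf P (fst v) * pmf Q (snd v)) = pmf J v * log 2 (pmf P (fst v)) + pmf J v * log 2 (pmf Q (snd v))"
    proof (cases "pmf J v > 0")
      case True
      then have "pmf P (fst v) > 0" "pmf Q (snd v) > 0" using pos[OF True]
        by (auto simp: zero_less_mult_iff pmf_nonneg dest: order.strict_implies_not_eq)
      then show ?thesis by (simp add: log_mult distrib_left)
    next
      case False
      then have "pmf J v = 0" using pmf_nonneg[of J v] by linarith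
      then show ?thesis by simp
    qed
  qed
  also have "\<dots> = (\<Sum>v\<in>B. pmf J v * log 2 (pmf P (fst v))) + (\<Sum>v\<in>B. pmf J v * log 2 (pmf Q (snd v)))"
    by (rule sum.distrib)
  also have "(\<Sum>v\<in>B. pmf J v * log 2 (pmf P (fst v))) = (\<Sum>x\<in>X ` set_pmf p. pmf P x * log 2 (pmf P x))"
  proof -
    have "(\<Sum>v\<in>B. pmf J v * log 2 (pmf P (fst v))) = (\<Sum>x\<in>X ` set_pmf p. \<Sum>y\<in>Y ` set_pmf p. pmf J (x, y) * log 2 (pmf P x))"
      unfolding B_def by (simp add: sum.cartesian_product case_prod_beta)
    also have "\<dots> = (\<Sum>x\<in>X ` set_pmf p. (\<Sum>y\<in>Y ` set_pmf p. pmf J (x, y)) * log 2 (pmf P x))"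
      by (simp add: sum_distrib_right)
    also have "\<dots> = (\<Sum>x\<in>X ` set_pmf p. pmf P x * log 2 (pmf P x))"
      unfolding J_def P_def by (simp add: marg_fst[OF fin])
    finally show ?thesis .
  qed
  also have "(\<Sum>v\<in>B. pmf J v * log 2 (pmf Q (snd v))) = (\<Sum>y\<in>Y ` set_pmf p. pmf Q y * log 2 (pmf Q y))"
  proof -
    have "(\<Sum>v\<in>B. pmf J v * log 2 (pmf Q (snd v))) = (\<Sum>x\<in>X ` set_pmf p. \<Sum>y\<in>Y ` set_pmf p. pmf J (x, y) * log 2 (pmf Q y))"
      unfolding B_def by (simp add: sum.cartesian_product case_prod_beta)
    also have "\<dots> = (\<Sum>y\<in>Y ` set_pmf p. \<Sum>x\<in>X ` set_pmf p. pmf J (x, y) * log 2 (pmf Q y))"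
      by (rule sum.swap)
    also have "\<dots> = (\<Sum>y\<in>Y ` set_pmf p. (\<Sum>x\<in>X ` set_pmf p. pmf J (x, y)) * log 2 (pmf Q y))"
      by (simp add: sum_distrib_right)
    also have "\<dots> = (\<Sum>y\<in>Y ` set_pmf p. pmf Q y * log 2 (pmf Q y))"
      unfolding J_def Q_def by (simp add: marg_snd[OF fin])
    finally show ?thesis .
  qed
  finally have "(\<Sum>x\<in>X ` set_pmf p. pmf P x * log 2 (pmf P x)) + (\<Sum>y\<in>Y ` set_pmf p. pmf Q y * log 2 (pmf Q y))
     \<le> (\<Sum>v\<in>B. pmf J v * log 2 (pmf J v))" using g by simp
  then show ?thesis using HJ HP HQ unfolding J_def P_def Q_def by simp
qed

lemma pmf_cond_map:
  assumes fin: "finite (set_pmf p)" and y: "y \<in> Y ` set_pmf p"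
  shows "pmf (map_pmf X (cond_pmf p {z. Y z = y})) x
       = pmf (map_pmf (\<lambda>z. (X z, Y z)) p) (x, y) / pmf (map_pmf Y p) y"
proof -
  let ?F = "set_pmf p"
  have ne: "set_pmf p \<inter> {z. Y z = y} \<noteq> {}" using y by auto
  have sC: "set_pmf (cond_pmf p {z. Y z = y}) \<subseteq> ?F" using ne by simp
  have mQ: "measure p {z. Y z = y} = pmf (map_pmf Y p) y"
    by (simp add: pmf_map vimage_def)
  have "pmf (map_pmf X (cond_pmf p {z. Y z = y})) x = (\<Sum>z\<in>{z\<in>?F. X z = x}. pmf (cond_pmf p {z. Y z = y}) z)"
    by (rule pmf_map_finite[OF fin sC])
  also have "\<dots> = (\<Sum>z\<in>{z\<in>?F. X z = x}. if Y z = y then pmf p z / pmf (map_pmf Y p) y else 0)"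
    unfolding mQ[symmetric] using ne by (simp add: pmf_cond)
  also have "\<dots> = (\<Sum>z\<in>{z\<in>?F. X z = x \<and> Y z = y}. pmf p z) / pmf (map_pmf Y p) y"
  proof -
    have "(\<Sum>z\<in>{z\<in>?F. X z = x}. if Y z = y then pmf p z / pmf (map_pmf Y p) y else 0)
        = (\<Sum>z\<in>{z\<in>{z\<in>?F. X z = x}. Y z = y}. pmf p z / pmf (map_pmf Y p) y)"
      using fin by (simp add: sum.inter_filter) (rule sum.cong; simp)
    also have "{z\<in>{z\<in>?F. X z = x}. Y z = y} = {z\<in>?F. X z = x \<and> Y z = y}" by auto
    finally show ?thesis by (simp add: sum_divide_distrib)
  qed
  also have "(\<Sum>z\<in>{z\<in>?F. X z = x \<and> Y z = y}. pmf p z) = pmf (map_pmf (\<lambda>z. (X z, Y z)) p) (x, y)"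
    using pmf_map_finite[OF fin order_refl, of "\<lambda>z. (X z, Y z)" "(x, y)"] by simp
  finally show ?thesis .
qed

lemma chain:
  assumes fin: "finite (set_pmf p)"
  shows "cond_entropy p X Y = entropy (map_pmf (\<lambda>z. (X z, Y z)) p) - entropy (map_pmf Y p)"
proof -
  define J where "J = map_pmf (\<lambda>z. (X z, Y z)) p"
  define Q where "Q = map_pmf Y p"
  define B where "B = X ` set_pmf p \<times> Y ` set_pmf p"
  have finB: "finite B" using fin by (simp add: B_def)
  have sJ: "set_pmf J \<subseteq> B" unfolding J_def B_def by (rule set_joint)
  have HJ: "entropy J = - (\<Sum>v\<in>B. pmf J v * log 2 (pmf J v))"
    by (rule entropy_superset[OF finB sJ])
  have HQ: "entropy Q = - (\<Sum>y\<in>Y ` set_pmf p. pmf Q y * log 2 (pmf Q y))"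
    unfolding entropy_def Q_def by simp
  have tm: "pmf Q y * entropy (map_pmf X (cond_pmf p {z. Y z = y}))
      = - (\<Sum>x\<in>X ` set_pmf p. pmf J (x, y) * log 2 (pmf J (x, y))) + pmf Q y * log 2 (pmf Q y)"
    if y: "y \<in> Y ` set_pmf p" for y
  proof -
    have Qpos: "pmf Q y > 0" using y unfolding Q_def by (auto simp: pmf_positive)
    have ne: "set_pmf p \<inter> {z. Y z = y} \<noteq> {}" using y by auto
    have sM: "set_pmf (map_pmf X (cond_pmf p {z. Y z = y})) \<subseteq> X ` set_pmf p" using ne by auto
    have "entropy (map_pmf X (cond_pmf p {z. Y z = y}))
        = - (\<Sum>x\<in>X ` set_pmf p. (pmf J (x, y) / pmf Q y) * log 2 (pmf J (x, y) / pmf Q y))"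
      using entropy_superset[OF _ sM] fin unfolding J_def Q_def by (simp add: pmf_cond_map[OF fin y])
    then have "pmf Q y * entropy (map_pmf X (cond_pmf p {z. Y z = y}))
        = - (\<Sum>x\<in>X ` set_pmf p. pmf Q y * ((pmf J (x, y) / pmf Q y) * log 2 (pmf J (x, y) / pmf Q y)))"
      by (simp add: sum_distrib_left)
    also have "\<dots> = - (\<Sum>x\<in>X ` set_pmf p. pmf J (x, y) * log 2 (pmf J (x, y)) - pmf J (x, y) * log 2 (pmf Q y))"
    proof -
      have "pmf Q y * ((pmf J (x, y) / pmf Q y) * log 2 (pmf J (x, y) / pmf Q y))
          = pmf J (x, y) * log 2 (pmf J (x, y)) - pmf J (x, y) * log 2 (pmf Q y)" for x
      proof (cases "pmf J (x, y) > 0")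
        case True
        then show ?thesis using Qpos by (simp add: log_divide right_diff_distrib)
      next
        case False
        then have "pmf J (x, y) = 0" using pmf_nonneg[of J "(x, y)"] by linarith
        then show ?thesis by simp
      qed
      then show ?thesis by simp
    qed
    also have "\<dots> = - (\<Sum>x\<in>X ` set_pmf p. pmf J (x, y) * log 2 (pmf J (x, y)))
        + (\<Sum>x\<in>X ` set_pmf p. pmf J (x, y)) * log 2 (pmf Q y)"
      by (simp add: sum_subtractf sum_distrib_right)
    also have "(\<Sum>x\<in>X ` set_pmf p. pmf J (x, y)) = pmf Q y"
      unfolding J_def Q_def by (simp add: marg_snd[OF fin])
    finally show ?thesis .
  qed
  have "cond_entropy p X Y = (\<Sum>y\<in>Y ` set_pmf p. pmf Q y * entropy (map_pmf X (cond_pmf p {z. Y z = y})))"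
    unfolding cond_entropy_def Q_def ..
  also have "\<dots> = (\<Sum>y\<in>Y ` set_pmf p. - (\<Sum>x\<in>X ` set_pmf p. pmf J (x, y) * log 2 (pmf J (x, y))) + pmf Q y * log 2 (pmf Q y))"
    by (rule sum.cong[OF refl]) (rule tm)
  also have "\<dots> = - (\<Sum>y\<in>Y ` set_pmf p. \<Sum>x\<in>X ` set_pmf p. pmf J (x, y) * log 2 (pmf J (x, y))) + (\<Sum>y\<in>Y ` set_pmf p. pmf Q y * log 2 (pmf Q y))"
    by (simp add: sum.distrib sum_negf sum_subtractf)
  also have "(\<Sum>y\<in>Y ` set_pmf p. \<Sum>x\<in>X ` set_pmf p. pmf J (x, y) * log 2 (pmf J (x, y))) = (\<Sum>v\<in>B. pmf J v * log 2 (pmf J v))"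
    unfolding B_def by (subst sum.swap) (simp add: sum.cartesian_product case_prod_beta)
  finally show ?thesis using HJ HQ unfolding J_def Q_def by simp
qed

definition EE :: "nat set \<Rightarrow> (nat \<Rightarrow> 'a) pmf \<Rightarrow> real" where
  "EE S \<mu> = entropy (map_pmf (\<lambda>x. restrict x S) \<mu>)"

definition HH :: "nat \<Rightarrow> (nat \<Rightarrow> 'a) pmf \<Rightarrow> real" where
  "HH i \<mu> = entropy (map_pmf (\<lambda>x. x i) \<mu>)"

lemma inj_split:
  assumes "i \<in> S"
  shows "inj_on (\<lambda>z. (z i, restrict z (S - {i}))) (extensional S)"
proof (rule inj_onI)
  fix z w assume z: "z \<in> extensional S" and w: "w \<in> extensional S"
    and eq: "(z i, restrict z (S - {i})) = (w i, restrict w (S - {i}))"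
  show "z = w"
  proof
    fix j
    show "z j = w j"
    proof (cases "j \<in> S")
      case True
      show ?thesis
      proof (cases "j = i")
        case True then show ?thesis using eq by simp
      next
        case False
        then have "restrict z (S - {i}) j = restrict w (S - {i}) j" using eq by simp
        then show ?thesis using False \<open>j \<in> S\<close> by simp
      qed
    next
      case False
      then show ?thesis using extensional_arb[OF z False] extensional_arb[OF w False] by simp
    qed
  qed
qed

lemma EE_split:
  assumes "i \<in> S"
  shows "entropy (map_pmf (\<lambda>z. (z i, restrict z (S - {i}))) (map_pmf (\<lambda>x. restrict x S) \<mu>)) = EE S \<mu>"
  unfolding EE_def
  by (rule entropy_map_inj, rule inj_on_subset[OF inj_split[OF assms]]) auto

lemma cond_marg:
  assumes fin: "finite (set_pmf \<mu>)" and i: "i \<in> S"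
  shows "cond_entropy (marginal S \<mu>) (\<lambda>x. x i) (\<lambda>x. restrict x (S - {i})) = EE S \<mu> - EE (S - {i}) \<mu>"
proof -
  have fin': "finite (set_pmf (marginal S \<mu>))" using fin by (simp add: marginal_def)
  have "cond_entropy (marginal S \<mu>) (\<lambda>x. x i) (\<lambda>x. restrict x (S - {i}))
      = entropy (map_pmf (\<lambda>z. (z i, restrict z (S - {i}))) (marginal S \<mu>))
        - entropy (map_pmf (\<lambda>z. restrict z (S - {i})) (marginal S \<mu>))"
    by (rule chain[OF fin'])
  also have "entropy (map_pmf (\<lambda>z. (z i, restrict z (S - {i}))) (marginal S \<mu>)) = EE S \<mu>"
    unfolding marginal_def by (rule EE_split[OF i])
  also have "map_pmf (\<lambda>z. restrict z (S - {i})) (marginal S \<mu>) = map_pmf (\<lambda>x. restrict x (S - {i})) \<mu>"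
    unfolding marginal_def map_pmf_comp by (simp add: restrict_restrict Int_absorb1 Diff_subset)
  finally show ?thesis unfolding EE_def .
qed

lemma EE_marg: "entropy (map_pmf (\<lambda>x. restrict x S) (marginal S \<mu>)) = EE S \<mu>"
  unfolding marginal_def map_pmf_comp EE_def by (simp add: restrict_restrict)

lemma EE_empty: "EE {} \<mu> = 0"
proof -
  have "map_pmf (\<lambda>x. restrict x {}) \<mu> = return_pmf (\<lambda>_. undefined)"
    by (simp add: map_pmf_const[symmetric] restrict_def)
  then show ?thesis by (simp add: EE_def entropy_return)
qed

lemma EE_subadd:
  assumes fin: "finite (set_pmf \<mu>)" and i: "i \<in> S"
  shows "EE S \<mu> \<le> HH i \<mu> + EE (S - {i}) \<mu>"
proof -
  have "map_pmf (\<lambda>z. (z i, restrict z (S - {i}))) (map_pmf (\<lambda>x. restrict x S) \<mu>)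
      = map_pmf (\<lambda>z. (z i, restrict z (S - {i}))) \<mu>"
    unfolding map_pmf_comp using i by (simp add: restrict_restrict Int_absorb1 Diff_subset)
  then have "EE S \<mu> = entropy (map_pmf (\<lambda>z. (z i, restrict z (S - {i}))) \<mu>)"
    using EE_split[OF i, of \<mu>] by simp
  also have "\<dots> \<le> HH i \<mu> + EE (S - {i}) \<mu>"
    unfolding HH_def EE_def by (rule subadd[OF fin])
  finally show ?thesis .
qed

definition TT :: "nat set \<Rightarrow> (nat \<Rightarrow> 'a) pmf \<Rightarrow> real" where
  "TT S \<mu> = (\<Sum>i\<in>S. HH i \<mu>) - EE S \<mu>"

lemma TT_remove:
  assumes "finite S" "i \<in> S"
  shows "TT S \<mu> - TT (S - {i}) \<mu> = HH i \<mu> - EE S \<mu> + EE (S - {i}) \<mu>"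
  unfolding TT_def using sum.remove[OF assms, of "\<lambda>i. HH i \<mu>"] by simp

lemma TT_nonneg:
  assumes fin: "finite (set_pmf \<mu>)" and S: "finite S"
  shows "TT S \<mu> \<ge> 0"
  using S
proof (induction S rule: finite_induct)
  case empty
  then show ?case by (simp add: TT_def EE_empty)
next
  case (insert x F)
  have "TT (insert x F) \<mu> - TT (insert x F - {x}) \<mu> = HH x \<mu> - EE (insert x F) \<mu> + EE (insert x F - {x}) \<mu>"
    using insert by (intro TT_remove) auto
  moreover have "EE (insert x F) \<mu> \<le> HH x \<mu> + EE (insert x F - {x}) \<mu>"
    by (rule EE_subadd[OF fin]) simp
  moreover have "insert x F - {x} = F" using insert by auto
  ultimately show ?case using insert by simp
qed

lemma DTC_bound:
  assumes fin: "finite (set_pmf \<mu>)" and S: "finite S"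
  shows "DTC S (marginal S \<mu>) \<le> (\<Sum>i\<in>S. TT S \<mu> - TT (S - {i}) \<mu>)"
proof -
  have "DTC S (marginal S \<mu>) = EE S \<mu> - (\<Sum>i\<in>S. EE S \<mu> - EE (S - {i}) \<mu>)"
    unfolding DTC_def EE_marg using cond_marg[OF fin] by simp
  moreover have "(\<Sum>i\<in>S. TT S \<mu> - TT (S - {i}) \<mu>) = (\<Sum>i\<in>S. HH i \<mu> - EE S \<mu> + EE (S - {i}) \<mu>)"
    using TT_remove[OF S] by (intro sum.cong) auto
  moreover have "(\<Sum>i\<in>S. HH i \<mu> - EE S \<mu> + EE (S - {i}) \<mu>) - (EE S \<mu> - (\<Sum>i\<in>S. EE S \<mu> - EE (S - {i}) \<mu>))
      = TT S \<mu>"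
    unfolding TT_def by (simp add: sum.distrib sum_subtractf)
  moreover have "TT S \<mu> \<ge> 0" by (rule TT_nonneg[OF fin S])
  ultimately show ?thesis by linarith
qed

lemma greedy:
  fixes T :: "nat set \<Rightarrow> real"
  assumes "finite S"
  shows "\<exists>S'\<subseteq>S. (\<forall>i\<in>S'. T S' - T (S' - {i}) \<le> c) \<and> real (card (S - S')) * c \<le> T S - T S'"
  using assms
proof (induction S rule: finite_psubset_induct)
  case (psubset S)
  show ?case
  proof (cases "\<forall>i\<in>S. T S - T (S - {i}) \<le> c")
    case True
    then show ?thesis by (intro exI[of _ S]) simp
  next
    case False
    then obtain i where i: "i \<in> S" "T S - T (S - {i}) > c" by force
    then have "S - {i} \<subset> S" by auto
    from psubset.IH[OF this] obtain S' where S': "S' \<subseteq> S - {i}"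
      "\<forall>j\<in>S'. T S' - T (S' - {j}) \<le> c" "real (card (S - {i} - S')) * c \<le> T (S - {i}) - T S'"
      by blast
    have "S - S' = insert i (S - {i} - S')" using S' i by auto
    then have "card (S - S') = Suc (card (S - {i} - S'))" using psubset.hyps by simp
    then have "real (card (S - S')) * c \<le> T S - T S'" using S'(3) i(2) by (simp add: algebra_simps)
    then show ?thesis using S' by (intro exI[of _ S']) auto
  qed
qed

theorem lemma3p7:
  fixes A :: "'a set" and n :: nat and \<mu> :: "(nat \<Rightarrow> 'a) pmf" and r :: real
  assumes "finite A"
    and "set_pmf \<mu> \<subseteq> PiE {1..n} (\<lambda>_. A)"
    and "r > 0"
  shows "\<exists>S. S \<subseteq> {1..n} \<and> real (card S) \<ge> (1 - r) * real n \<and>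
             DTC S (marginal S \<mu>) \<le> TC {1..n} \<mu> / r"
proof -
  define U where "U = {1..n}"
  have finU: "finite U" by (simp add: U_def)
  have cardU: "card U = n" by (simp add: U_def)
  have fin: "finite (set_pmf \<mu>)"
    by (rule finite_subset[OF assms(2)]) (simp add: finite_PiE assms(1))
  have TCeq: "TC {1..n} \<mu> = TT U \<mu>"
    unfolding TC_def TT_def HH_def EE_def U_def ..
  have T0: "TT U \<mu> \<ge> 0" by (rule TT_nonneg[OF fin finU])
  show ?thesis
  proof (cases "TT U \<mu> > 0")
    case False
    then have Z: "TT U \<mu> = 0" using T0 by linarith
    have "DTC U (marginal U \<mu>) \<le> (\<Sum>i\<in>U. TT U \<mu> - TT (U - {i}) \<mu>)"
      by (rule DTC_bound[OF fin finU])
    also have "\<dots> \<le> (\<Sum>i\<in>U. 0)"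
      by (rule sum_mono) (use Z TT_nonneg[OF fin] finU in auto)
    finally have "DTC U (marginal U \<mu>) \<le> TC {1..n} \<mu> / r" using TCeq Z by simp
    moreover have "real (card U) \<ge> (1 - r) * real n" using cardU assms(3) by (simp add: mult_le_cancel_right2)
    ultimately show ?thesis unfolding U_def by blast
  next
    case True
    then have "U \<noteq> {}" by (auto simp: TT_def EE_empty)
    then have npos: "n > 0" unfolding U_def by (cases n) auto
    define c where "c = TT U \<mu> / (r * real n)"
    have cpos: "c > 0" unfolding c_def using True npos assms(3) by simp
    obtain S' where S': "S' \<subseteq> U" "\<forall>i\<in>S'. TT S' \<mu> - TT (S' - {i}) \<mu> \<le> c"
      "real (card (U - S')) * c \<le> TT U \<mu> - TT S' \<mu>"
      using greedy[OF finU, of "\<lambda>S. TT S \<mu>" c] by blast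
    have finS': "finite S'" using S'(1) finU by (rule finite_subset)
    have "real (card (U - S')) * c \<le> TT U \<mu>" using S'(3) TT_nonneg[OF fin finS'] by linarith
    then have "real (card (U - S')) * TT U \<mu> \<le> (r * real n) * TT U \<mu>"
      unfolding c_def using npos assms(3) by (simp add: field_simps)
    then have k: "real (card (U - S')) \<le> r * real n" using True by simp
    have cd: "card (U - S') = n - card S'" using card_Diff_subset[OF finS' S'(1)] cardU by simp
    have cle: "card S' \<le> n" using card_mono[OF finU S'(1)] cardU by simp
    have card_ok: "real (card S') \<ge> (1 - r) * real n"
      using k cd cle by (simp add: of_nat_diff algebra_simps)
    have "DTC S' (marginal S' \<mu>) \<le> (\<Sum>i\<in>S'. TT S' \<mu> - TT (S' - {i}) \<mu>)"
      by (rule DTC_bound[OF fin finS'])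
    also have "\<dots> \<le> (\<Sum>i\<in>S'. c)" by (rule sum_mono) (use S'(2) in auto)
    also have "\<dots> = real (card S') * c" by simp
    also have "\<dots> \<le> real n * c" using cle cpos by (simp add: mult_right_mono)
    also have "\<dots> = TC {1..n} \<mu> / r" unfolding c_def TCeq using npos by (simp add: field_simps)
    finally show ?thesis using S'(1) card_ok unfolding U_def by blast
  qed
qed

end
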